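(* For every integer $N\ge 0$ and all $t$: (a) $qt\,\tau^{-1,1}_N(t)\tau^{0,1}_{N+1}(qt)+(1-qtb_1)\tau^{-1,1}_N(qt)\tau^{0,1}_{N+1}(t)-\tau^{-1,2}_N(t)\tau^{0,0}_{N+1}(qt)=0$; (b) $\tau^{-1,1}_N(qt)\tau^{0,1}_{N+1}(t/q)+t(1-q^{-N}b_1)\tau^{0,1}_N(t)\tau^{-1,1}_{N+1}(t)-\tau^{-1,2}_N(t)\tau^{0,0}_{N+1}(t)=0$.
   Context: $q$ is a fixed nonzero complex constant (generic) and $b_1,b_3$ are generic parameters. $\psi(t,b_1,b_3)$ is a function of three variables satisfying, for all values of its arguments: (R1) $\psi(qt,b_1,b_3)=b_1\psi(t,b_1,b_3)+(1-b_1)\psi(qt,b_1/q,b_3)$, (R2) $b_3\psi(qt,b_1,b_3)=\psi(t,b_1,b_3)+(b_3-1)\psi(t,b_1,qb_3)$, (R3) $qtb_1b_3\psi(qt,b_1,b_3)=(qtb_1-1)\psi(t,b_1,b_3)+\psi(t,qb_1,b_3)$, (R4) $qt\psi(qt,b_1,b_3)=(qtb_1-1)\psi(t,b_1,b_3)+\psi(qt,b_1,b_3/q)$. For integers $N\ge 0$, $m,n$: $\tau^{m,n}_N(t)=\det\big(\psi(t,q^{m-j+1}b_1,q^{n+i-1}b_3)\big)_{i,j=1}^N$ for $N\ge1$, and $\tau^{m,n}_0(t)=1$. *)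

theory Defs
  imports Complex_Main "Jordan_Normal_Form.Determinant"
begin

definition psi_relations :: "complex \<Rightarrow> (complex \<Rightarrow> complex \<Rightarrow> complex \<Rightarrow> complex) \<Rightarrow> bool" where
  "psi_relations q psi \<longleftrightarrow>
     (\<forall>t b1 b3.
        psi (q*t) b1 b3 = b1 * psi t b1 b3 + (1 - b1) * psi (q*t) (b1/q) b3
      \<and> b3 * psi (q*t) b1 b3 = psi t b1 b3 + (b3 - 1) * psi t b1 (q*b3)
      \<and> q*t*b1*b3 * psi (q*t) b1 b3 = (q*t*b1 - 1) * psi t b1 b3 + psi t (q*b1) b3
      \<and> q*t * psi (q*t) b1 b3 = (q*t*b1 - 1) * psi t b1 b3 + psi (q*t) b1 (b3/q))"

text \<open>tau^{m,n}_N(t) = det (psi(t, q^{m-j+1} b1, q^{n+i-1} b3))_{i,j=1..N}, tau_0 = 1.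
  Matrix indices are 0-based here: entry (i,j) with i,j < N corresponds to (i+1,j+1).\<close>
definition tau :: "complex \<Rightarrow> (complex \<Rightarrow> complex \<Rightarrow> complex \<Rightarrow> complex) \<Rightarrow> complex \<Rightarrow> complex
                   \<Rightarrow> int \<Rightarrow> int \<Rightarrow> nat \<Rightarrow> complex \<Rightarrow> complex" where
  "tau q psi b1 b3 m n N t =
     (if N = 0 then 1
      else det (mat N N (\<lambda>(i, j). psi t (q powi (m - int j) * b1) (q powi (n + int i) * b3))))"

end

theory Submission
  imports Defs
begin

definition dt :: "nat \<Rightarrow> (nat \<Rightarrow> nat \<Rightarrow> complex) \<Rightarrow> complex" where
  "dt n f = det (mat n n (\<lambda>(i,j). f i j))"

lemma dt_cong: "(\<And>i j. i < n \<Longrightarrow> j < n \<Longrightarrow> f i j = g i j) \<Longrightarrow> dt n f = dt n g"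
  unfolding dt_def by (intro arg_cong[where f=det] eq_matI) auto

definition ins :: "nat \<Rightarrow> nat \<Rightarrow> nat" where "ins k i = (if i < k then i else Suc i)"

definition cof :: "nat \<Rightarrow> (nat \<Rightarrow> nat \<Rightarrow> complex) \<Rightarrow> nat \<Rightarrow> nat \<Rightarrow> complex" where
  "cof n f k l = (-1)^(k+l) * dt (n-1) (\<lambda>i j. f (ins k i) (ins l j))"

lemma cof_eq: "k < n \<Longrightarrow> l < n \<Longrightarrow> cofactor (mat n n (\<lambda>(i,j). f i j)) k l = cof n f k l"
  unfolding cofactor_def cof_def dt_def mat_delete_def ins_def
  by (intro arg_cong2[where f="(*)"] refl arg_cong[where f=det] eq_matI) auto

lemma lap: assumes "k < n" shows "dt n f = (\<Sum>l<n. f k l * cof n f k l)"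
proof -
  have "dt n f = (\<Sum>l<n. mat n n (\<lambda>(i,j). f i j) $$ (k,l) * cofactor (mat n n (\<lambda>(i,j). f i j)) k l)"
    unfolding dt_def by (rule laplace_expansion_row[OF _ assms]) simp
  also have "\<dots> = (\<Sum>l<n. f k l * cof n f k l)"
    using assms by (intro sum.cong refl) (simp add: cof_eq)
  finally show ?thesis .
qed

definition upd :: "(nat \<Rightarrow> nat \<Rightarrow> complex) \<Rightarrow> nat \<Rightarrow> (nat \<Rightarrow> complex) \<Rightarrow> nat \<Rightarrow> nat \<Rightarrow> complex" where
  "upd f k v = (\<lambda>i. if i = k then v else f i)"

lemma cof_upd: "cof n (upd f k v) k l = cof n f k l"
  unfolding cof_def upd_def ins_def by (intro arg_cong2[where f="(*)"] refl dt_cong) auto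

lemma upd_same[simp]: "upd f k v k = v" by (simp add: upd_def)
lemma upd_other[simp]: "i \<noteq> k \<Longrightarrow> upd f k v i = f i" by (simp add: upd_def)

lemma lap_upd: assumes "k < n" shows "dt n (upd f k v) = (\<Sum>l<n. v l * cof n f k l)"
proof -
  have "dt n (upd f k v) = (\<Sum>l<n. upd f k v k l * cof n (upd f k v) k l)" by (rule lap[OF assms])
  then show ?thesis by (simp only: cof_upd upd_same)
qed

lemma adj_id: assumes "l < n" "m < n"
  shows "(\<Sum>k<n. f k m * cof n f k l) = (if l = m then dt n f else 0)"
proof -
  let ?A = "mat n n (\<lambda>(i,j). f i j)"
  have A: "?A \<in> carrier_mat n n" by simp
  have "(adj_mat ?A * ?A) $$ (l,m) = (det ?A \<cdot>\<^sub>m 1\<^sub>m n) $$ (l,m)" using adj_mat(3)[OF A] by simp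
  also have "\<dots> = (if l = m then dt n f else 0)" using assms by (simp add: dt_def)
  also have "(adj_mat ?A * ?A) $$ (l,m) = (\<Sum>k<n. cofactor ?A k l * f k m)"
    using assms adj_mat(1)[OF A]
    by (simp add: adj_mat_def scalar_prod_def atLeast0LessThan)
  also have "\<dots> = (\<Sum>k<n. f k m * cof n f k l)"
    using assms by (intro sum.cong refl) (simp add: cof_eq)
  finally show ?thesis .
qed

lemma cramer: assumes r: "r < n"
  shows "dt n f * dt n (upd g r v) = (\<Sum>k<n. dt n (upd f k v) * dt n (upd g r (f k)))"
proof -
  have "(\<Sum>k<n. dt n (upd f k v) * dt n (upd g r (f k)))
      = (\<Sum>k<n. (\<Sum>l<n. v l * cof n f k l) * (\<Sum>m<n. f k m * cof n g r m))"
    using r by (intro sum.cong refl) (simp add: lap_upd)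
  also have "\<dots> = (\<Sum>k<n. \<Sum>l<n. \<Sum>m<n. v l * cof n f k l * (f k m * cof n g r m))"
    by (simp add: sum_product)
  also have "\<dots> = (\<Sum>l<n. \<Sum>k<n. \<Sum>m<n. v l * cof n f k l * (f k m * cof n g r m))"
    by (rule sum.swap)
  also have "\<dots> = (\<Sum>l<n. \<Sum>m<n. \<Sum>k<n. v l * cof n f k l * (f k m * cof n g r m))"
    by (rule sum.cong[OF refl]) (rule sum.swap)
  also have "\<dots> = (\<Sum>l<n. \<Sum>m<n. v l * cof n g r m * (\<Sum>k<n. f k m * cof n f k l))"
    by (simp add: sum_distrib_left mult_ac)
  also have "\<dots> = (\<Sum>l<n. \<Sum>m<n. v l * cof n g r m * (if l = m then dt n f else 0))"
    by (intro sum.cong refl) (simp add: adj_id)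
  also have "\<dots> = (\<Sum>l<n. v l * cof n g r l * dt n f)"
    by (intro sum.cong refl) (simp add: if_distrib sum.delta cong: if_cong)
  also have "\<dots> = dt n f * dt n (upd g r v)"
    using lap_upd[OF r, of g v] by (simp add: sum_distrib_left mult_ac)
  finally show ?thesis by simp
qed

lemma dt_upd_lin: assumes "r < n"
  shows "dt n (upd g r (\<lambda>j. a * u j + b * w j)) = a * dt n (upd g r u) + b * dt n (upd g r w)"
  using assms by (simp add: lap_upd algebra_simps sum.distrib sum_distrib_left)

lemma dt_upd_same: assumes "r < n" "k < n" "k \<noteq> r"
  shows "dt n (upd g r (g k)) = 0"
  unfolding dt_def
proof (rule det_identical_rows[of _ n k r])
  show "row (mat n n (\<lambda>(i, j). upd g r (g k) i j)) k = row (mat n n (\<lambda>(i, j). upd g r (g k) i j)) r"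
    using assms by (intro eq_vecI) (auto simp: upd_def)
qed (use assms in auto)

lemma colscale: "dt n (\<lambda>i j. s j * f i j) = (\<Prod>j<n. s j) * dt n f"
proof -
  let ?A = "mat n n (\<lambda>(i,j). f i j)"
  let ?S = "mat n n (\<lambda>(i,j). if i = j then s j else 0)"
  have "?A * ?S = mat n n (\<lambda>(i,j). s j * f i j)"
  proof (rule eq_matI)
    fix i j assume ij: "i < dim_row (mat n n (\<lambda>(i,j). s j * f i j))" "j < dim_col (mat n n (\<lambda>(i,j). s j * f i j))"
    hence "(?A * ?S) $$ (i,j) = (\<Sum>k\<in>{0..<n}. f i k * (if k = j then s j else 0))"
      by (simp add: scalar_prod_def)
    also have "\<dots> = s j * f i j" using ij by (simp add: if_distrib sum.delta cong: if_cong)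
    finally show "(?A * ?S) $$ (i,j) = mat n n (\<lambda>(i,j). s j * f i j) $$ (i,j)" using ij by simp
  qed auto
  hence "dt n (\<lambda>i j. s j * f i j) = det (?A * ?S)"
    unfolding dt_def by simp
  also have "\<dots> = det ?A * det ?S" by (rule det_mult) auto
  finally have "dt n (\<lambda>i j. s j * f i j) = det ?A * det ?S" .
  moreover have "det ?S = (\<Prod>j<n. s j)"
    by (subst det_lower_triangular[of n]) (auto simp: prod_list_diag_prod atLeast0LessThan)
  ultimately show ?thesis by (simp add: dt_def mult.commute)
qed

lemma m1sq: "(-1::complex)^(n+n) = 1" by (induct n) auto

lemma border:
  assumes rho: "\<And>j. j < n \<Longrightarrow> \<rho> j = h j * \<rho> (Suc j)"
  shows "dt (Suc n) (\<lambda>i j. if i = n then \<rho> j else f i j) = \<rho> n * dt n (\<lambda>i j. f i j - h j * f i (Suc j))"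
proof -
  define F where "F = (\<lambda>i j. if i = n then \<rho> j else f i j)"
  define G where "G = (\<lambda>i j. if j < n then F i j - h j * F i (Suc j) else F i j)"
  let ?U = "mat (Suc n) (Suc n) (\<lambda>(k,j). if k = j then 1 else if k = Suc j then - h j else (0::complex))"
  have U: "det ?U = 1"
    by (subst det_lower_triangular[of "Suc n"]) (auto simp: prod_list_diag_prod)
  have AU: "mat (Suc n) (Suc n) (\<lambda>(i,j). F i j) * ?U = mat (Suc n) (Suc n) (\<lambda>(i,j). G i j)"
  proof (rule eq_matI)
    fix i j assume ij: "i < dim_row (mat (Suc n) (Suc n) (\<lambda>(i,j). G i j))" "j < dim_col (mat (Suc n) (Suc n) (\<lambda>(i,j). G i j))"
    hence "(mat (Suc n) (Suc n) (\<lambda>(i,j). F i j) * ?U) $$ (i,j)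
        = (\<Sum>k\<in>{0..<Suc n}. F i k * (if k = j then 1 else if k = Suc j then - h j else 0))"
      by (simp add: scalar_prod_def)
    also have "\<dots> = (\<Sum>k\<in>{0..<Suc n}. (if k = j then F i k else 0) + (if k = Suc j then - h j * F i k else 0))"
      by (intro sum.cong refl) auto
    also have "\<dots> = G i j" using ij by (cases "j < n") (auto simp: sum.distrib G_def less_Suc_eq)
    finally show "(mat (Suc n) (Suc n) (\<lambda>(i,j). F i j) * ?U) $$ (i,j) = mat (Suc n) (Suc n) (\<lambda>(i,j). G i j) $$ (i,j)"
      using ij by simp
  qed auto
  have "dt (Suc n) G = det (mat (Suc n) (Suc n) (\<lambda>(i,j). F i j) * ?U)"
    unfolding dt_def AU ..
  also have "\<dots> = dt (Suc n) F * det ?U" unfolding dt_def by (rule det_mult) auto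
  finally have "dt (Suc n) F = dt (Suc n) G" using U by simp
  also have "\<dots> = (\<Sum>l<Suc n. G n l * cof (Suc n) G n l)" by (rule lap) simp
  also have "\<dots> = (\<Sum>l<n. G n l * cof (Suc n) G n l) + G n n * cof (Suc n) G n n"
    by simp
  also have "(\<Sum>l<n. G n l * cof (Suc n) G n l) = 0"
    by (intro sum.neutral) (auto simp: G_def F_def rho)
  also have "cof (Suc n) G n n = dt n (\<lambda>i j. f i j - h j * f i (Suc j))"
    unfolding cof_def m1sq by (simp, intro dt_cong) (auto simp: G_def F_def ins_def)
  also have "G n n = \<rho> n" by (simp add: G_def F_def)
  finally show ?thesis by (simp add: F_def)
qed

lemma unit0:
  "dt (Suc n) (\<lambda>i j. if i = n then (if j = 0 then 1 else 0) else f i j) = (-1)^n * dt n (\<lambda>i j. f i (Suc j))"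
proof -
  define G where "G = (\<lambda>i j. if i = n then (if j = 0 then 1 else 0) else f i j)"
  have "dt (Suc n) G = (\<Sum>l<Suc n. G n l * cof (Suc n) G n l)" by (rule lap) simp
  also have "\<dots> = (\<Sum>l<Suc n. if l = 0 then cof (Suc n) G n l else 0)"
    by (intro sum.cong) (auto simp: G_def)
  also have "\<dots> = cof (Suc n) G n 0" by simp
  also have "\<dots> = (-1)^n * dt n (\<lambda>i j. f i (Suc j))"
    by (simp add: G_def cof_def, intro dt_cong) (auto simp: ins_def)
  finally show ?thesis by (simp add: G_def)
qed

lemma unitL:
  "dt (Suc n) (\<lambda>i j. if i = n then (if j = n then 1 else 0) else f i j) = dt n f"
proof -
  define G where "G = (\<lambda>i j. if i = n then (if j = n then 1 else 0) else f i j)"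
  have "dt (Suc n) G = (\<Sum>l<Suc n. G n l * cof (Suc n) G n l)" by (rule lap) simp
  also have "\<dots> = (\<Sum>l<Suc n. if l = n then cof (Suc n) G n l else 0)"
    by (intro sum.cong) (auto simp: G_def)
  also have "\<dots> = cof (Suc n) G n n" by simp
  also have "\<dots> = dt n f"
    unfolding cof_def m1sq by (simp, intro dt_cong) (auto simp: G_def ins_def)
  finally show ?thesis by (simp add: G_def)
qed

definition rows3 :: "nat \<Rightarrow> (nat \<Rightarrow> nat \<Rightarrow> complex) \<Rightarrow> (nat \<Rightarrow> complex) \<Rightarrow> (nat \<Rightarrow> complex) \<Rightarrow> nat \<Rightarrow> nat \<Rightarrow> complex" where
  "rows3 N V a b = (\<lambda>i. if i < N then V i else if i = N then a else b)"

definition e0 :: "nat \<Rightarrow> complex" where "e0 j = (if j = 0 then 1 else 0)"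
definition eL :: "nat \<Rightarrow> nat \<Rightarrow> complex" where "eL m j = (if j = m then 1 else 0)"

lemma cramer3:
  assumes "\<And>k. k < N \<Longrightarrow> dt (Suc (Suc N)) (upd W (Suc N) (V k)) = 0"
  shows "dt (Suc (Suc N)) (rows3 N V p r) * dt (Suc (Suc N)) (upd W (Suc N) v)
       = dt (Suc (Suc N)) (rows3 N V v r) * dt (Suc (Suc N)) (upd W (Suc N) p)
       + dt (Suc (Suc N)) (rows3 N V p v) * dt (Suc (Suc N)) (upd W (Suc N) r)"
proof -
  let ?n = "Suc (Suc N)"
  let ?f = "rows3 N V p r"
  have "dt ?n ?f * dt ?n (upd W (Suc N) v) = (\<Sum>k<?n. dt ?n (upd ?f k v) * dt ?n (upd W (Suc N) (?f k)))"
    by (rule cramer) simp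
  also have "\<dots> = (\<Sum>k<N. dt ?n (upd ?f k v) * dt ?n (upd W (Suc N) (?f k)))
      + dt ?n (upd ?f N v) * dt ?n (upd W (Suc N) (?f N))
      + dt ?n (upd ?f (Suc N) v) * dt ?n (upd W (Suc N) (?f (Suc N)))"
    by simp
  also have "(\<Sum>k<N. dt ?n (upd ?f k v) * dt ?n (upd W (Suc N) (?f k))) = 0"
    by (intro sum.neutral) (auto simp: rows3_def assms)
  also have "upd ?f N v = rows3 N V v r" by (auto simp: upd_def rows3_def)
  also have "dt ?n (upd ?f (Suc N) v) = dt ?n (rows3 N V p v)"
    by (intro dt_cong) (auto simp: upd_def rows3_def)
  finally show ?thesis by (simp add: rows3_def)
qed

lemma S1: "dt (Suc (Suc N)) (rows3 N V e0 (eL (Suc N))) = (-1)^N * dt N (\<lambda>i j. V i (Suc j))"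
proof -
  have "dt (Suc (Suc N)) (rows3 N V e0 (eL (Suc N)))
      = dt (Suc (Suc N)) (\<lambda>i j. if i = Suc N then (if j = Suc N then 1 else 0) else (if i < N then V i j else e0 j))"
    by (intro dt_cong) (auto simp: rows3_def eL_def)
  also have "\<dots> = dt (Suc N) (\<lambda>i j. if i < N then V i j else e0 j)" by (rule unitL)
  also have "\<dots> = dt (Suc N) (\<lambda>i j. if i = N then (if j = 0 then 1 else 0) else V i j)"
    by (intro dt_cong) (auto simp: e0_def)
  also have "\<dots> = (-1)^N * dt N (\<lambda>i j. V i (Suc j))" by (rule unit0)
  finally show ?thesis .
qed

lemma S2: assumes "\<And>j. j < N \<Longrightarrow> \<rho> j = h j * \<rho> (Suc j)"
  shows "dt (Suc (Suc N)) (rows3 N V \<rho> (eL (Suc N))) = \<rho> N * dt N (\<lambda>i j. V i j - h j * V i (Suc j))"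
proof -
  have "dt (Suc (Suc N)) (rows3 N V \<rho> (eL (Suc N)))
      = dt (Suc (Suc N)) (\<lambda>i j. if i = Suc N then (if j = Suc N then 1 else 0) else (if i < N then V i j else \<rho> j))"
    by (intro dt_cong) (auto simp: rows3_def eL_def)
  also have "\<dots> = dt (Suc N) (\<lambda>i j. if i < N then V i j else \<rho> j)" by (rule unitL)
  also have "\<dots> = dt (Suc N) (\<lambda>i j. if i = N then \<rho> j else V i j)"
    by (intro dt_cong) auto
  also have "\<dots> = \<rho> N * dt N (\<lambda>i j. V i j - h j * V i (Suc j))" by (rule border) (rule assms)
  finally show ?thesis .
qed

lemma S3: assumes "\<And>j. j < Suc N \<Longrightarrow> \<rho> j = h j * \<rho> (Suc j)" and "\<rho> (Suc N) = 1"
  shows "dt (Suc (Suc N)) (rows3 N V e0 \<rho>) = (-1)^N * dt N (\<lambda>i j. V i (Suc j) - h (Suc j) * V i (Suc (Suc j)))"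
proof -
  have "dt (Suc (Suc N)) (rows3 N V e0 \<rho>)
      = dt (Suc (Suc N)) (\<lambda>i j. if i = Suc N then \<rho> j else (if i < N then V i j else e0 j))"
    by (intro dt_cong) (auto simp: rows3_def)
  also have "\<dots> = \<rho> (Suc N) * dt (Suc N) (\<lambda>i j. (if i < N then V i j else e0 j) - h j * (if i < N then V i (Suc j) else e0 (Suc j)))"
    by (rule border) (rule assms(1))
  also have "\<dots> = dt (Suc N) (\<lambda>i j. if i = N then (if j = 0 then 1 else 0) else V i j - h j * V i (Suc j))"
    using assms(2) by (simp, intro dt_cong) (auto simp: e0_def)
  also have "\<dots> = (-1)^N * dt N (\<lambda>i j. V i (Suc j) - h (Suc j) * V i (Suc (Suc j)))" by (rule unit0)
  finally show ?thesis .
qed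

lemma S4a: "dt (Suc m) (upd W m (eL m)) = dt m W"
proof -
  have "dt (Suc m) (upd W m (eL m)) = dt (Suc m) (\<lambda>i j. if i = m then (if j = m then 1 else 0) else W i j)"
    by (intro dt_cong) (auto simp: upd_def eL_def)
  also have "\<dots> = dt m W" by (rule unitL)
  finally show ?thesis .
qed

lemma S4b: "dt (Suc m) (upd W m e0) = (-1)^m * dt m (\<lambda>i j. W i (Suc j))"
proof -
  have "dt (Suc m) (upd W m e0) = dt (Suc m) (\<lambda>i j. if i = m then (if j = 0 then 1 else 0) else W i j)"
    by (intro dt_cong) (auto simp: upd_def e0_def)
  also have "\<dots> = (-1)^m * dt m (\<lambda>i j. W i (Suc j))" by (rule unit0)
  finally show ?thesis .
qed

lemma S4c: assumes "\<And>j. j < m \<Longrightarrow> \<rho> j = h j * \<rho> (Suc j)" and "\<rho> m = 1"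
  shows "dt (Suc m) (upd W m \<rho>) = dt m (\<lambda>i j. W i j - h j * W i (Suc j))"
proof -
  have "dt (Suc m) (upd W m \<rho>) = dt (Suc m) (\<lambda>i j. if i = m then \<rho> j else W i j)"
    by (intro dt_cong) (auto simp: upd_def)
  also have "\<dots> = \<rho> m * dt m (\<lambda>i j. W i j - h j * W i (Suc j))" by (rule border) (rule assms(1))
  finally show ?thesis using assms(2) by simp
qed

definition rh :: "(nat \<Rightarrow> complex) \<Rightarrow> nat \<Rightarrow> nat \<Rightarrow> complex" where
  "rh h m j = (\<Prod>k\<in>{j..<m}. h k)"

lemma rh_top[simp]: "rh h m m = 1" by (simp add: rh_def)
lemma rh_step: "j < m \<Longrightarrow> rh h m j = h j * rh h m (Suc j)"
  by (simp add: rh_def prod.atLeast_Suc_lessThan)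

locale L =
  fixes q b1 b3 :: complex and psi :: "complex \<Rightarrow> complex \<Rightarrow> complex \<Rightarrow> complex"
  assumes q_nz: "q \<noteq> 0" and rel: "psi_relations q psi"
begin

definition P :: "complex \<Rightarrow> int \<Rightarrow> nat \<Rightarrow> complex" where
  "P s c j = psi s (q powi (- int j) * b1) (q powi c * b3)"
definition bq :: "nat \<Rightarrow> complex" where "bq j = q powi (- int j) * b1"
definition cc :: "nat \<Rightarrow> complex" where "cc j = 1 - bq j"
definition gm :: "complex \<Rightarrow> nat \<Rightarrow> complex" where "gm s j = (1 - bq j) * (1 - s * bq j)"

abbreviation T where "T \<equiv> tau q psi b1 b3"

lemma qi_Suc': "q powi (- 1 - int j) = q powi (- int j) / q"
proof -
  have e: "- 1 - int j = - int j - 1" by simp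
  have "q powi (- int j - 1) = q powi (- int j) / q powi 1"
    using q_nz by (intro power_int_diff) simp
  thus ?thesis unfolding e by simp
qed

lemma qi_Suc: "q powi (- int (Suc j)) = q powi (- int j) / q"
  using qi_Suc'[of j] by simp

lemma bq_Suc: "bq (Suc j) = bq j / q" by (simp add: bq_def qi_Suc')

lemma qi_pow: "q powi (- int j) * q ^ j = 1"
  using q_nz by (simp add: power_int_minus)

lemma P_bq: "P s c j = psi s (bq j) (q powi c * b3)" by (simp add: P_def bq_def)
lemma P_Suc: "P s c (Suc j) = psi s (bq j / q) (q powi c * b3)" by (simp add: P_bq bq_Suc)

lemma R1P: "P (q*s) c j - cc j * P (q*s) c (Suc j) = bq j * P s c j"
proof -
  from rel have "psi (q*s) (bq j) (q powi c * b3) = bq j * psi s (bq j) (q powi c * b3) + (1 - bq j) * psi (q*s) (bq j / q) (q powi c * b3)"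
    unfolding psi_relations_def by blast
  thus ?thesis by (simp add: P_bq bq_Suc cc_def)
qed

lemma qc1: "q * (q powi c * b3) = q powi (c+1) * b3"
  using q_nz by (simp add: power_int_add)
lemma qcm1: "q powi c * b3 / q = q powi (c-1) * b3"
  using q_nz by (simp add: power_int_diff)

lemma R2P: "q powi c * b3 * P (q*s) c j = P s c j + (q powi c * b3 - 1) * P s (c+1) j"
proof -
  from rel have "q powi c * b3 * psi (q*s) (bq j) (q powi c * b3) = psi s (bq j) (q powi c * b3) + (q powi c * b3 - 1) * psi s (bq j) (q * (q powi c * b3))"
    unfolding psi_relations_def by blast
  thus ?thesis by (simp add: P_bq qc1)
qed

lemma RyP: "P s c j = bq j * P s (c - 1) j + gm s j * P s c (Suc j)"
proof -
  define B1 where "B1 = bq j"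
  define B3 where "B3 = q powi c * b3"
  have qs: "q * (s/q) = s" using q_nz by simp
  from rel have r1: "psi (q*(s/q)) B1 B3 = B1 * psi (s/q) B1 B3 + (1 - B1) * psi (q*(s/q)) (B1/q) B3"
    and r4: "q*(s/q) * psi (q*(s/q)) B1 B3 = (q*(s/q)*B1 - 1) * psi (s/q) B1 B3 + psi (q*(s/q)) B1 (B3/q)"
    unfolding psi_relations_def by blast+
  define A where "A = psi s B1 B3"
  define Bv where "Bv = psi (s/q) B1 B3"
  define C where "C = psi s (B1/q) B3"
  define E where "E = psi s B1 (B3/q)"
  have r1': "A = B1 * Bv + (1 - B1) * C" using r1 unfolding qs A_def Bv_def C_def .
  have r4': "s * A = (s*B1 - 1) * Bv + E" using r4 unfolding qs A_def Bv_def E_def .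
  have "A - (B1 * E + (1 - B1) * (1 - s * B1) * C)
      = (1 - s*B1) * (A - (B1 * Bv + (1 - B1) * C)) + B1 * (s * A - ((s*B1 - 1) * Bv + E))"
    by (simp add: algebra_simps)
  also have "\<dots> = 0" using r1' r4' by simp
  finally have "A = B1 * E + (1 - B1) * (1 - s * B1) * C" by simp
  thus ?thesis
    by (simp add: A_def E_def C_def B1_def B3_def P_bq bq_Suc gm_def qcm1)
qed

lemma tau0: "T 0 n N s = dt N (\<lambda>i j. P s (n + int i) j)"
  unfolding tau_def dt_def P_def by (cases "N = 0") (auto intro!: arg_cong[where f=det] eq_matI)

lemma taum1: "T (-1) n N s = dt N (\<lambda>i j. P s (n + int i) (Suc j))"
proof -
  have e: "\<And>j::nat. -1 - int j = - int (Suc j)" by simp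
  show ?thesis
    unfolding tau_def dt_def P_def e by (cases "N = 0") (auto intro!: arg_cong[where f=det] eq_matI)
qed

end

context L begin

definition Bp :: "nat \<Rightarrow> complex" where "Bp n = (\<Prod>j<n. bq j)"
definition Bs :: "nat \<Rightarrow> complex" where "Bs n = (\<Prod>j<n. bq (Suc j))"
definition W :: "complex \<Rightarrow> nat \<Rightarrow> nat \<Rightarrow> complex" where "W s i j = P s (1 + int i) j"

lemma rhs: "j < Suc N \<Longrightarrow> rh h (Suc N) j = h j * rh h (Suc N) (Suc j)" by (rule rh_step)

lemma phi_e0: "dt (Suc (Suc N)) (upd (W s) (Suc N) e0) = (-1)^(Suc N) * T (-1) 1 (Suc N) s"
  by (simp add: S4b taum1 W_def)

lemma phi_eL: "dt (Suc (Suc N)) (upd (W s) (Suc N) (eL (Suc N))) = T 0 1 (Suc N) s"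
proof -
  have "W s = (\<lambda>i j. P s (1 + int i) j)" by (simp add: W_def fun_eq_iff)
  thus ?thesis by (simp add: S4a tau0)
qed

lemma phi_c: "dt (Suc (Suc N)) (upd (W (q*s)) (Suc N) (rh cc (Suc N))) = Bp (Suc N) * T 0 1 (Suc N) s"
proof -
  have "dt (Suc (Suc N)) (upd (W (q*s)) (Suc N) (rh cc (Suc N)))
      = dt (Suc N) (\<lambda>i j. W (q*s) i j - cc j * W (q*s) i (Suc j))"
    by (rule S4c) (auto simp: rh_step)
  also have "\<dots> = dt (Suc N) (\<lambda>i j. bq j * P s (1 + int i) j)"
    by (intro dt_cong) (simp add: W_def R1P)
  also have "\<dots> = Bp (Suc N) * T 0 1 (Suc N) s" by (simp add: colscale Bp_def tau0)
  finally show ?thesis .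
qed

lemma phi_g: "dt (Suc (Suc N)) (upd (W s) (Suc N) (rh (gm s) (Suc N))) = Bp (Suc N) * T 0 0 (Suc N) s"
proof -
  have "dt (Suc (Suc N)) (upd (W s) (Suc N) (rh (gm s) (Suc N)))
      = dt (Suc N) (\<lambda>i j. W s i j - gm s j * W s i (Suc j))"
    by (rule S4c) (auto simp: rh_step)
  also have "\<dots> = dt (Suc N) (\<lambda>i j. bq j * P s (int i) j)"
    by (intro dt_cong) (simp only: W_def, subst RyP[of s "1 + int _"], simp)
  also have "\<dots> = Bp (Suc N) * T 0 0 (Suc N) s" by (simp add: colscale Bp_def tau0)
  finally show ?thesis .
qed

lemma M1: "dt (Suc (Suc N)) (rows3 N (\<lambda>i j. P s (c0 + int i) j) e0 (eL (Suc N))) = (-1)^N * T (-1) c0 N s"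
  by (simp add: S1 taum1)

lemma M2c: "dt (Suc (Suc N)) (rows3 N (\<lambda>i j. P (q*s) (c0 + int i) j) (rh cc (Suc N)) (eL (Suc N)))
    = cc N * Bp N * T 0 c0 N s"
proof -
  have "dt (Suc (Suc N)) (rows3 N (\<lambda>i j. P (q*s) (c0 + int i) j) (rh cc (Suc N)) (eL (Suc N)))
      = rh cc (Suc N) N * dt N (\<lambda>i j. P (q*s) (c0 + int i) j - cc j * P (q*s) (c0 + int i) (Suc j))"
    by (rule S2) (auto simp: rh_step)
  also have "\<dots> = cc N * dt N (\<lambda>i j. bq j * P s (c0 + int i) j)"
    by (simp add: rh_step R1P)
  also have "\<dots> = cc N * Bp N * T 0 c0 N s" by (simp add: colscale Bp_def tau0)
  finally show ?thesis .
qed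

lemma M2g: "dt (Suc (Suc N)) (rows3 N (\<lambda>i j. P s (c0 + int i) j) (rh (gm s) (Suc N)) (eL (Suc N)))
    = gm s N * Bp N * T 0 (c0 - 1) N s"
proof -
  have "dt (Suc (Suc N)) (rows3 N (\<lambda>i j. P s (c0 + int i) j) (rh (gm s) (Suc N)) (eL (Suc N)))
      = rh (gm s) (Suc N) N * dt N (\<lambda>i j. P s (c0 + int i) j - gm s j * P s (c0 + int i) (Suc j))"
    by (rule S2) (auto simp: rh_step)
  also have "\<dots> = gm s N * dt N (\<lambda>i j. bq j * P s (c0 - 1 + int i) j)"
    by (simp add: rh_step, intro disjI2 dt_cong) (subst RyP[of s "c0 + int _"], simp add: algebra_simps)
  also have "\<dots> = gm s N * Bp N * T 0 (c0 - 1) N s" by (simp add: colscale Bp_def tau0)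
  finally show ?thesis .
qed

lemma M3c: "dt (Suc (Suc N)) (rows3 N (\<lambda>i j. P (q*s) (c0 + int i) j) e0 (rh cc (Suc N)))
    = (-1)^N * Bs N * T (-1) c0 N s"
proof -
  have "dt (Suc (Suc N)) (rows3 N (\<lambda>i j. P (q*s) (c0 + int i) j) e0 (rh cc (Suc N)))
      = (-1)^N * dt N (\<lambda>i j. P (q*s) (c0 + int i) (Suc j) - cc (Suc j) * P (q*s) (c0 + int i) (Suc (Suc j)))"
    by (rule S3) (auto simp: rh_step)
  also have "\<dots> = (-1)^N * dt N (\<lambda>i j. bq (Suc j) * P s (c0 + int i) (Suc j))"
    by (simp add: R1P)
  also have "\<dots> = (-1)^N * Bs N * T (-1) c0 N s" by (simp add: colscale Bs_def taum1)
  finally show ?thesis .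
qed

lemma M3g: "dt (Suc (Suc N)) (rows3 N (\<lambda>i j. P s (c0 + int i) j) e0 (rh (gm s) (Suc N)))
    = (-1)^N * Bs N * T (-1) (c0 - 1) N s"
proof -
  have "dt (Suc (Suc N)) (rows3 N (\<lambda>i j. P s (c0 + int i) j) e0 (rh (gm s) (Suc N)))
      = (-1)^N * dt N (\<lambda>i j. P s (c0 + int i) (Suc j) - gm s (Suc j) * P s (c0 + int i) (Suc (Suc j)))"
    by (rule S3) (auto simp: rh_step)
  also have "\<dots> = (-1)^N * dt N (\<lambda>i j. bq (Suc j) * P s (c0 - 1 + int i) (Suc j))"
    by (intro arg_cong2[where f="(*)"] refl dt_cong) (subst RyP[of s "c0 + int _" "Suc _"], simp add: algebra_simps)
  also have "\<dots> = (-1)^N * Bs N * T (-1) (c0 - 1) N s" by (simp add: colscale Bs_def taum1)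
  finally show ?thesis .
qed

end

context L begin

lemma qbqS: "q * bq (Suc j) = bq j" using q_nz by (simp add: bq_Suc)
lemma key_aux: "((1 - x) * (1 - q*t*x) - (1 - x)) * ((1 - y) * (1 - t*x)) = q * ((1 - x) * (1 - t*x)) * ((1 - y) * (1 - t*x) - (1 - y))"
  for x y :: complex by (simp add: algebra_simps)
lemma key: "(gm (q*t) j - cc j) * gm (q*t) (Suc j) = q * gm t j * (gm (q*t) (Suc j) - cc (Suc j))"
proof -
  have e: "q * t * (bq j / q) = t * bq j" using q_nz by simp
  show ?thesis unfolding gm_def cc_def bq_Suc e by (rule key_aux)
qed
lemma ent: "bq j * P t c j - (q * gm t j) * (bq (Suc j) * P t c (Suc j)) = (bq j * bq j) * P t (c - 1) j"
proof -
  have r: "P t c j = bq j * P t (c - 1) j + gm t j * P t c (Suc j)" by (rule RyP)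
  have "(q * gm t j) * (bq (Suc j) * P t c (Suc j)) = gm t j * (q * bq (Suc j)) * P t c (Suc j)"
    by (simp add: mult_ac)
  also have "\<dots> = bq j * (gm t j * P t c (Suc j))" by (simp only: qbqS) (simp add: mult_ac)
  finally have h: "(q * gm t j) * (bq (Suc j) * P t c (Suc j)) = bq j * (gm t j * P t c (Suc j))" .
  show ?thesis by (simp only: h, subst r) (simp add: algebra_simps)
qed


lemma phiV1: "k < N \<Longrightarrow> dt (Suc (Suc N)) (upd (W s) (Suc N) (\<lambda>j. P s (1 + int k) j)) = 0"
proof -
  assume k: "k < N"
  have "(\<lambda>j. P s (1 + int k) j) = W s k" by (simp add: W_def fun_eq_iff)
  thus ?thesis using k by (simp add: dt_upd_same)
qed

lemma phiV2: "k < N \<Longrightarrow> dt (Suc (Suc N)) (upd (W s) (Suc N) (\<lambda>j. P s (2 + int k) j)) = 0"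
proof -
  assume k: "k < N"
  have "(\<lambda>j. P s (2 + int k) j) = W s (Suc k)" by (simp add: W_def fun_eq_iff add_ac)
  thus ?thesis using k by (simp add: dt_upd_same)
qed

lemma phiVY: assumes b3: "b3 \<noteq> 0" and k: "k < N"
  shows "dt (Suc (Suc N)) (upd (W t) (Suc N) (\<lambda>j. P (q*t) (1 + int k) j)) = 0"
proof -
  define A where "A = q powi (1 + int k) * b3"
  have A: "A \<noteq> 0" using b3 q_nz by (simp add: A_def)
  have "(\<lambda>j. P (q*t) (1 + int k) j) = (\<lambda>j. (1/A) * W t k j + ((A - 1)/A) * W t (Suc k) j)"
  proof
    fix j
    have "A * P (q*t) (1 + int k) j = P t (1 + int k) j + (A - 1) * P t (1 + int k + 1) j"
      unfolding A_def by (rule R2P)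
    moreover have "1 + int k + 1 = 1 + int (Suc k)" by simp
    ultimately show "P (q*t) (1 + int k) j = (1/A) * W t k j + ((A - 1)/A) * W t (Suc k) j"
      using A by (simp add: W_def field_simps)
  qed
  hence "dt (Suc (Suc N)) (upd (W t) (Suc N) (\<lambda>j. P (q*t) (1 + int k) j))
      = dt (Suc (Suc N)) (upd (W t) (Suc N) (\<lambda>j. (1/A) * W t k j + ((A - 1)/A) * W t (Suc k) j))"
    by (simp only:)
  also have "\<dots> = (1/A) * dt (Suc (Suc N)) (upd (W t) (Suc N) (W t k)) + ((A - 1)/A) * dt (Suc (Suc N)) (upd (W t) (Suc N) (W t (Suc k)))"
    by (rule dt_upd_lin) simp
  also have "\<dots> = 0" using k by (simp add: dt_upd_same)
  finally show ?thesis .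
qed

lemma M5: "dt (Suc (Suc N)) (rows3 N (\<lambda>i j. P (q*t) (c0 + int i) j) (rh (gm (q*t)) (Suc N)) (rh cc (Suc N)))
    = - cc N * q * t * bq N * (Bp N * Bp N) * T 0 (c0 - 1) N t"
proof -
  let ?V = "\<lambda>i j. P (q*t) (c0 + int i) j"
  let ?rg = "rh (gm (q*t)) (Suc N)"
  let ?rc = "rh cc (Suc N)"
  define \<sigma> where "\<sigma> j = ?rg j - cc j * ?rg (Suc j)" for j
  have sig: "\<sigma> j = q * gm t j * \<sigma> (Suc j)" if j: "j < N" for j
  proof -
    define R where "R = ?rg (Suc (Suc j))"
    have a: "?rg j = gm (q*t) j * ?rg (Suc j)" using j by (simp add: rh_step)
    have b: "?rg (Suc j) = gm (q*t) (Suc j) * R" using j by (simp add: rh_step R_def)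
    have s1: "\<sigma> j = (gm (q*t) j - cc j) * gm (q*t) (Suc j) * R" by (simp add: \<sigma>_def a b algebra_simps)
    have s2: "\<sigma> (Suc j) = (gm (q*t) (Suc j) - cc (Suc j)) * R" by (simp add: \<sigma>_def b R_def algebra_simps)
    show ?thesis unfolding s1 s2 key by (simp add: mult.assoc)
  qed
  have sigN: "\<sigma> N = - cc N * q * t * bq N"
    by (simp add: \<sigma>_def rh_step gm_def cc_def algebra_simps)
  have "dt (Suc (Suc N)) (rows3 N ?V ?rg ?rc)
      = dt (Suc (Suc N)) (\<lambda>i j. if i = Suc N then ?rc j else (if i < N then ?V i j else ?rg j))"
    by (intro dt_cong) (auto simp: rows3_def)
  also have "\<dots> = ?rc (Suc N) * dt (Suc N) (\<lambda>i j. (if i < N then ?V i j else ?rg j) - cc j * (if i < N then ?V i (Suc j) else ?rg (Suc j)))"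
    by (rule border) (simp add: rh_step)
  also have "\<dots> = dt (Suc N) (\<lambda>i j. if i = N then \<sigma> j else bq j * P t (c0 + int i) j)"
    by (simp, intro dt_cong) (auto simp: \<sigma>_def R1P)
  also have "\<dots> = \<sigma> N * dt N (\<lambda>i j. bq j * P t (c0 + int i) j - (q * gm t j) * (bq (Suc j) * P t (c0 + int i) (Suc j)))"
    by (rule border) (rule sig)
  also have "dt N (\<lambda>i j. bq j * P t (c0 + int i) j - (q * gm t j) * (bq (Suc j) * P t (c0 + int i) (Suc j)))
      = dt N (\<lambda>i j. (bq j * bq j) * P t (c0 - 1 + int i) j)"
  proof (intro dt_cong)
    fix i j
    have e: "c0 + int i - 1 = c0 - 1 + int i" by simp
    show "bq j * P t (c0 + int i) j - (q * gm t j) * (bq (Suc j) * P t (c0 + int i) (Suc j))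
        = (bq j * bq j) * P t (c0 - 1 + int i) j"
      unfolding ent e ..
  qed
  also have "\<dots> = (Bp N * Bp N) * T 0 (c0 - 1) N t"
    by (simp add: colscale Bp_def tau0 prod.distrib)
  finally show ?thesis by (simp add: sigN mult_ac)
qed

end

context L begin

lemma CE: "(-1)^N * T (-1) 2 N t * (Bp (Suc N) * T 0 0 (Suc N) t)
  = gm t N * Bp N * T 0 1 N t * ((-1)^(Suc N) * T (-1) 1 (Suc N) t) + (-1)^N * Bs N * T (-1) 1 N t * T 0 1 (Suc N) t"
proof -
  have "dt (Suc (Suc N)) (rows3 N (\<lambda>i j. P t (2 + int i) j) e0 (eL (Suc N))) * dt (Suc (Suc N)) (upd (W t) (Suc N) (rh (gm t) (Suc N)))
    = dt (Suc (Suc N)) (rows3 N (\<lambda>i j. P t (2 + int i) j) (rh (gm t) (Suc N)) (eL (Suc N))) * dt (Suc (Suc N)) (upd (W t) (Suc N) e0)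
    + dt (Suc (Suc N)) (rows3 N (\<lambda>i j. P t (2 + int i) j) e0 (rh (gm t) (Suc N))) * dt (Suc (Suc N)) (upd (W t) (Suc N) (eL (Suc N)))"
    by (rule cramer3) (rule phiV2)
  thus ?thesis by (simp only: M1 phi_g M2g phi_e0 M3g phi_eL) simp
qed

lemma CF: assumes b3: "b3 \<noteq> 0"
  shows "(-1)^N * T (-1) 1 N (q*t) * (Bp (Suc N) * T 0 1 (Suc N) (t/q))
  = cc N * Bp N * T 0 1 N t * ((-1)^(Suc N) * T (-1) 1 (Suc N) t) + (-1)^N * Bs N * T (-1) 1 N t * T 0 1 (Suc N) t"
proof -
  have Wq: "W (q*(t/q)) = W t" using q_nz by simp
  have "dt (Suc (Suc N)) (rows3 N (\<lambda>i j. P (q*t) (1 + int i) j) e0 (eL (Suc N))) * dt (Suc (Suc N)) (upd (W t) (Suc N) (rh cc (Suc N)))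
    = dt (Suc (Suc N)) (rows3 N (\<lambda>i j. P (q*t) (1 + int i) j) (rh cc (Suc N)) (eL (Suc N))) * dt (Suc (Suc N)) (upd (W t) (Suc N) e0)
    + dt (Suc (Suc N)) (rows3 N (\<lambda>i j. P (q*t) (1 + int i) j) e0 (rh cc (Suc N))) * dt (Suc (Suc N)) (upd (W t) (Suc N) (eL (Suc N)))"
    by (rule cramer3) (rule phiVY[OF b3])
  moreover have "dt (Suc (Suc N)) (upd (W t) (Suc N) (rh cc (Suc N))) = Bp (Suc N) * T 0 1 (Suc N) (t/q)"
    using phi_c[of N "t/q"] unfolding Wq .
  ultimately show ?thesis by (simp only: M1 M2c phi_e0 M3c phi_eL)
qed

lemma CC: "(-1)^N * T (-1) 1 N (q*t) * (Bp (Suc N) * T 0 1 (Suc N) t)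
  = cc N * Bp N * T 0 1 N t * ((-1)^(Suc N) * T (-1) 1 (Suc N) (q*t)) + (-1)^N * Bs N * T (-1) 1 N t * T 0 1 (Suc N) (q*t)"
proof -
  have "dt (Suc (Suc N)) (rows3 N (\<lambda>i j. P (q*t) (1 + int i) j) e0 (eL (Suc N))) * dt (Suc (Suc N)) (upd (W (q*t)) (Suc N) (rh cc (Suc N)))
    = dt (Suc (Suc N)) (rows3 N (\<lambda>i j. P (q*t) (1 + int i) j) (rh cc (Suc N)) (eL (Suc N))) * dt (Suc (Suc N)) (upd (W (q*t)) (Suc N) e0)
    + dt (Suc (Suc N)) (rows3 N (\<lambda>i j. P (q*t) (1 + int i) j) e0 (rh cc (Suc N))) * dt (Suc (Suc N)) (upd (W (q*t)) (Suc N) (eL (Suc N)))"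
    by (rule cramer3) (rule phiV1)
  thus ?thesis by (simp only: M1 phi_c M2c phi_e0 M3c phi_eL)
qed

lemma CA: "(-1)^N * Bs N * T (-1) 2 N t * (Bp (Suc N) * T 0 0 (Suc N) (q*t))
  = (- cc N * q * t * bq N * (Bp N * Bp N) * T 0 1 N t) * ((-1)^(Suc N) * T (-1) 1 (Suc N) (q*t))
    + (-1)^N * Bs N * T (-1) 1 N (q*t) * (Bp (Suc N) * T 0 1 (Suc N) t)"
proof -
  have "dt (Suc (Suc N)) (rows3 N (\<lambda>i j. P (q*t) (2 + int i) j) e0 (rh cc (Suc N))) * dt (Suc (Suc N)) (upd (W (q*t)) (Suc N) (rh (gm (q*t)) (Suc N)))
    = dt (Suc (Suc N)) (rows3 N (\<lambda>i j. P (q*t) (2 + int i) j) (rh (gm (q*t)) (Suc N)) (rh cc (Suc N))) * dt (Suc (Suc N)) (upd (W (q*t)) (Suc N) e0)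
    + dt (Suc (Suc N)) (rows3 N (\<lambda>i j. P (q*t) (2 + int i) j) e0 (rh (gm (q*t)) (Suc N))) * dt (Suc (Suc N)) (upd (W (q*t)) (Suc N) (rh cc (Suc N)))"
    by (rule cramer3) (rule phiV2)
  thus ?thesis by (simp only: M3c phi_g M5 phi_e0 M3g phi_c) simp
qed

end

lemma alg_a:
  fixes s Bs bqN Q q t D5 Db De T11 Da T01 Dc T00 :: complex
  assumes CC: "s*D5*((Bs*Q)*bqN*Db) = (1 - bqN)*(Bs*Q)*De*(-s*T11) + s*Bs*Da*T01"
    and CA: "s*Bs*Dc*((Bs*Q)*bqN*T00) = (-(1 - bqN)*q*t*bqN*((Bs*Q)*(Bs*Q))*De)*(-s*T11) + s*Bs*D5*((Bs*Q)*bqN*Db)"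
    and nz: "s \<noteq> 0" "Bs \<noteq> 0" "bqN \<noteq> 0" "Q \<noteq> 0"
  shows "q*t*Da*T01 + (1 - q*t*(bqN*Q))*D5*Db - Dc*T00 = 0"
proof -
  have "s*Bs*Q*(Da*T01 - (bqN*Q*D5*Db + (Q - bqN*Q)*De*T11))
      = - Q * (s*D5*((Bs*Q)*bqN*Db) - ((1 - bqN)*(Bs*Q)*De*(-s*T11) + s*Bs*Da*T01))"
    by (simp add: algebra_simps)
  also have "\<dots> = 0" using CC by simp
  finally have i: "Da*T01 = bqN*Q*D5*Db + (Q - bqN*Q)*De*T11" using nz by simp
  have "s*Bs*Bs*Q*bqN*(Dc*T00 - ((Q - bqN*Q)*q*t*De*T11 + D5*Db))
      = (s*Bs*Dc*((Bs*Q)*bqN*T00) - ((-(1 - bqN)*q*t*bqN*((Bs*Q)*(Bs*Q))*De)*(-s*T11) + s*Bs*D5*((Bs*Q)*bqN*Db)))"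
    by (simp add: algebra_simps)
  also have "\<dots> = 0" using CA by simp
  finally have ii: "Dc*T00 = (Q - bqN*Q)*q*t*De*T11 + D5*Db" using nz by simp
  have "q*t*Da*T01 + (1 - q*t*(bqN*Q))*D5*Db - Dc*T00 = q*t*(Da*T01) + (1 - q*t*(bqN*Q))*D5*Db - (Dc*T00)"
    by (simp add: mult.assoc)
  also have "\<dots> = 0" unfolding i ii by (simp add: algebra_simps)
  finally show ?thesis .
qed

lemma alg_b:
  fixes s Bs bqN Q t D5 D6 De Df Dc Dd Da Db :: complex
  assumes CE: "s*Dc*((Bs*Q)*bqN*Dd) = (1 - bqN)*(1 - t*bqN)*(Bs*Q)*De*(-s*Df) + s*Bs*Da*Db"
    and CF: "s*D5*((Bs*Q)*bqN*D6) = (1 - bqN)*(Bs*Q)*De*(-s*Df) + s*Bs*Da*Db"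
    and nz: "s \<noteq> 0" "Bs \<noteq> 0" "bqN \<noteq> 0" "Q \<noteq> 0"
  shows "D5*D6 + t*(1 - bqN)*De*Df - Dc*Dd = 0"
proof -
  have "s*Bs*Q*bqN*(D5*D6 + t*(1 - bqN)*De*Df - Dc*Dd)
     = (s*D5*((Bs*Q)*bqN*D6) - ((1 - bqN)*(Bs*Q)*De*(-s*Df) + s*Bs*Da*Db))
     - (s*Dc*((Bs*Q)*bqN*Dd) - ((1 - bqN)*(1 - t*bqN)*(Bs*Q)*De*(-s*Df) + s*Bs*Da*Db))"
    by (simp add: algebra_simps)
  also have "\<dots> = 0" using CE CF by simp
  finally show ?thesis using nz by simp
qed

context L begin

lemma bq_nz: "b1 \<noteq> 0 \<Longrightarrow> bq j \<noteq> 0" using q_nz by (simp add: bq_def)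
lemma Bs_nz: "b1 \<noteq> 0 \<Longrightarrow> Bs n \<noteq> 0" by (simp add: Bs_def bq_nz)
lemma Bp_Suc: "Bp (Suc N) = Bp N * bq N" by (simp add: Bp_def)
lemma Bsq: "Bp N = Bs N * q^N"
proof -
  have "Bs N * q^N = (\<Prod>j<N. bq (Suc j)) * (\<Prod>j<N. q)" by (simp add: Bs_def)
  also have "\<dots> = (\<Prod>j<N. q * bq (Suc j))" by (simp add: prod.distrib mult_ac)
  also have "\<dots> = Bp N" by (simp add: qbqS Bp_def)
  finally show ?thesis by simp
qed
lemma bqN_Q: "bq N * q^N = b1"
proof -
  have "bq N * q^N = (q powi (- int N) * q^N) * b1" by (simp add: bq_def mult_ac)
  thus ?thesis by (simp add: qi_pow)
qed

lemma part_a: assumes b1: "b1 \<noteq> 0"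
  shows "q*t * T (-1) 1 N t * T 0 1 (N+1) (q*t) + (1 - q*t*b1) * T (-1) 1 N (q*t) * T 0 1 (N+1) t
         - T (-1) 2 N t * T 0 0 (N+1) (q*t) = 0"
proof -
  have nz: "(-1::complex)^N \<noteq> 0" "Bs N \<noteq> 0" "bq N \<noteq> 0" "q^N \<noteq> 0"
    using b1 q_nz by (auto simp: Bs_nz bq_nz)
  have h1: "(-1)^N * T (-1) 1 N (q*t) * ((Bs N * q^N) * bq N * T 0 1 (Suc N) t)
      = (1 - bq N) * (Bs N * q^N) * T 0 1 N t * (- ((-1)^N) * T (-1) 1 (Suc N) (q*t)) + (-1)^N * Bs N * T (-1) 1 N t * T 0 1 (Suc N) (q*t)"
    using CC[of N t] unfolding Bp_Suc unfolding Bsq cc_def by simp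
  have h2: "(-1)^N * Bs N * T (-1) 2 N t * ((Bs N * q^N) * bq N * T 0 0 (Suc N) (q*t))
      = (-(1 - bq N)*q*t*bq N*((Bs N * q^N)*(Bs N * q^N))*T 0 1 N t)*(- ((-1)^N) * T (-1) 1 (Suc N) (q*t))
        + (-1)^N * Bs N * T (-1) 1 N (q*t) * ((Bs N * q^N) * bq N * T 0 1 (Suc N) t)"
    using CA[of N t] unfolding Bp_Suc unfolding Bsq cc_def by simp
  from alg_a[OF h1 h2 nz] show ?thesis by (simp add: bqN_Q)
qed

lemma part_b: assumes b1: "b1 \<noteq> 0" and b3: "b3 \<noteq> 0"
  shows "T (-1) 1 N (q*t) * T 0 1 (N+1) (t/q) + t * (1 - b1 / q ^ N) * T 0 1 N t * T (-1) 1 (N+1) t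
         - T (-1) 2 N t * T 0 0 (N+1) t = 0"
proof -
  have nz: "(-1::complex)^N \<noteq> 0" "Bs N \<noteq> 0" "bq N \<noteq> 0" "q^N \<noteq> 0"
    using b1 q_nz by (auto simp: Bs_nz bq_nz)
  have h1: "(-1)^N * T (-1) 2 N t * ((Bs N * q^N) * bq N * T 0 0 (Suc N) t)
      = (1 - bq N) * (1 - t * bq N) * (Bs N * q^N) * T 0 1 N t * (- ((-1)^N) * T (-1) 1 (Suc N) t) + (-1)^N * Bs N * T (-1) 1 N t * T 0 1 (Suc N) t"
    using CE[of N t] unfolding Bp_Suc unfolding Bsq gm_def by simp
  have h2: "(-1)^N * T (-1) 1 N (q*t) * ((Bs N * q^N) * bq N * T 0 1 (Suc N) (t/q))
      = (1 - bq N) * (Bs N * q^N) * T 0 1 N t * (- ((-1)^N) * T (-1) 1 (Suc N) t) + (-1)^N * Bs N * T (-1) 1 N t * T 0 1 (Suc N) t"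
    using CF[OF b3, of N t] unfolding Bp_Suc unfolding Bsq cc_def by simp
  have e: "bq N = b1 / q^N" using bqN_Q q_nz by (simp add: field_simps)
  from alg_b[OF h1 h2 nz] show ?thesis by (simp add: e)
qed

end

lemma tau_van:
  assumes "b1 = 0 \<or> b3 = 0" "2 \<le> M"
  shows "tau q psi b1 b3 m n M s = 0"
proof -
  have M: "M \<noteq> 0" using assms(2) by simp
  let ?A = "mat M M (\<lambda>(i,j). psi s (q powi (m - int j) * b1) (q powi (n + int i) * b3))"
  have "det ?A = 0"
  proof (cases "b1 = 0")
    case True
    show ?thesis
      by (rule det_identical_columns[of ?A M 0 1]) (use assms(2) True in \<open>auto intro!: eq_vecI\<close>)
  next
    case False
    with assms(1) have b3: "b3 = 0" by simp
    show ?thesis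
      by (rule det_identical_rows[of ?A M 0 1]) (use assms(2) b3 in \<open>auto intro!: eq_vecI\<close>)
  qed
  thus ?thesis by (simp add: tau_def M)
qed

lemma tau_0: "tau q psi b1 b3 m n 0 s = 1" by (simp add: tau_def)
lemma tau_1: "tau q psi b1 b3 m n (Suc 0) s = psi s (q powi m * b1) (q powi n * b3)"
  by (simp add: tau_def det_single)

context L begin

lemma N0_a:
  shows "q*t * tau q psi b1 b3 (-1) 1 0 t * tau q psi b1 b3 0 1 (0+1) (q*t)
           + (1 - q*t*b1) * tau q psi b1 b3 (-1) 1 0 (q*t) * tau q psi b1 b3 0 1 (0+1) t
           - tau q psi b1 b3 (-1) 2 0 t * tau q psi b1 b3 0 0 (0+1) (q*t) = 0"
proof -
  from rel have "q*t*psi (q*t) b1 (q*b3) = (q*t*b1 - 1)*psi t b1 (q*b3) + psi (q*t) b1 (q*b3/q)"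
    unfolding psi_relations_def by blast
  thus ?thesis using q_nz by (simp add: tau_0 tau_1 algebra_simps)
qed

lemma N0_b:
  shows "tau q psi b1 b3 (-1) 1 0 (q*t) * tau q psi b1 b3 0 1 (0+1) (t/q)
           + t * (1 - b1 / q ^ 0) * tau q psi b1 b3 0 1 0 t * tau q psi b1 b3 (-1) 1 (0+1) t
           - tau q psi b1 b3 (-1) 2 0 t * tau q psi b1 b3 0 0 (0+1) t = 0"
proof -
  have qs: "q * (t/q) = t" using q_nz by simp
  from rel have r1: "psi (q*(t/q)) b1 (q*b3) = b1 * psi (t/q) b1 (q*b3) + (1 - b1) * psi (q*(t/q)) (b1/q) (q*b3)"
    and r4: "q*(t/q) * psi (q*(t/q)) b1 (q*b3) = (q*(t/q)*b1 - 1) * psi (t/q) b1 (q*b3) + psi (q*(t/q)) b1 (q*b3/q)"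
    unfolding psi_relations_def by blast+
  define A where "A = psi t b1 (q*b3)"
  define Z where "Z = psi (t/q) b1 (q*b3)"
  define C where "C = psi t (b1/q) (q*b3)"
  define E where "E = psi t b1 b3"
  have r1': "A = b1 * Z + (1 - b1) * C" using r1 unfolding qs A_def Z_def C_def .
  have r4': "t * A = (t*b1 - 1) * Z + E" using r4 q_nz unfolding qs A_def Z_def E_def by simp
  have "Z + t * (1 - b1) * C - E = (t * A - ((t*b1 - 1) * Z + E)) - t * (A - (b1 * Z + (1 - b1) * C))"
    by (simp add: algebra_simps)
  also have "\<dots> = 0" using r1' r4' by simp
  finally have main: "Z + t * (1 - b1) * C - E = 0" .
  have "q powi (-1) * b1 = b1 / q" by (simp add: power_int_minus field_simps)
  thus ?thesis using main by (simp add: tau_0 tau_1 Z_def C_def E_def)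
qed

end

theorem mainTheorem7:
  fixes q b1 b3 :: complex
    and psi :: "complex \<Rightarrow> complex \<Rightarrow> complex \<Rightarrow> complex"
  assumes q_nz: "q \<noteq> 0"
    and q_generic: "\<And>k::nat. k > 0 \<Longrightarrow> q ^ k \<noteq> 1"
    and b1_generic: "\<And>k::int. b1 \<noteq> q powi k"
    and b3_generic: "\<And>k::int. b3 \<noteq> q powi k"
    and rel: "psi_relations q psi"
  shows "\<forall>(N::nat) (t::complex).
           q*t * tau q psi b1 b3 (-1) 1 N t * tau q psi b1 b3 0 1 (N+1) (q*t)
           + (1 - q*t*b1) * tau q psi b1 b3 (-1) 1 N (q*t) * tau q psi b1 b3 0 1 (N+1) t
           - tau q psi b1 b3 (-1) 2 N t * tau q psi b1 b3 0 0 (N+1) (q*t) = 0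
         \<and> tau q psi b1 b3 (-1) 1 N (q*t) * tau q psi b1 b3 0 1 (N+1) (t/q)
           + t * (1 - b1 / q ^ N) * tau q psi b1 b3 0 1 N t * tau q psi b1 b3 (-1) 1 (N+1) t
           - tau q psi b1 b3 (-1) 2 N t * tau q psi b1 b3 0 0 (N+1) t = 0"
proof (intro allI)
  fix N :: nat and t :: complex
  interpret L q b1 b3 psi using q_nz rel by unfold_locales
  show "q*t * tau q psi b1 b3 (-1) 1 N t * tau q psi b1 b3 0 1 (N+1) (q*t)
           + (1 - q*t*b1) * tau q psi b1 b3 (-1) 1 N (q*t) * tau q psi b1 b3 0 1 (N+1) t
           - tau q psi b1 b3 (-1) 2 N t * tau q psi b1 b3 0 0 (N+1) (q*t) = 0
         \<and> tau q psi b1 b3 (-1) 1 N (q*t) * tau q psi b1 b3 0 1 (N+1) (t/q)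
           + t * (1 - b1 / q ^ N) * tau q psi b1 b3 0 1 N t * tau q psi b1 b3 (-1) 1 (N+1) t
           - tau q psi b1 b3 (-1) 2 N t * tau q psi b1 b3 0 0 (N+1) t = 0"
  proof (cases "b1 \<noteq> 0 \<and> b3 \<noteq> 0")
    case True
    thus ?thesis using part_a[where N=N and t=t] part_b[where N=N and t=t] by simp
  next
    case False
    hence deg: "b1 = 0 \<or> b3 = 0" by simp
    show ?thesis
    proof (cases "N = 0")
      case True
      thus ?thesis using N0_a[where t=t] N0_b[where t=t] by simp
    next
      case False
      hence "2 \<le> N + 1" by simp
      hence z: "\<And>m n s. tau q psi b1 b3 m n (N+1) s = 0" using tau_van[OF deg] by blast
      show ?thesis by (simp only: z) simp
    qed
  qed
qed

end
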